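(* Let $(X,d)$ be an ultrametric space and $f:X\to X$ a surjective isometry. Then $(X,d,f)$ has the two-sided shadowing property.
   Context: An ultrametric space satisfies $d(x,z)\le\max\{d(x,y),d(y,z)\}$. For a bijection $f$, the two-sided shadowing property means: for every $\varepsilon>0$ there is $\delta>0$ such that for every sequence $(x_n)_{n\in\mathbb{Z}}$ with $d(f(x_n),x_{n+1})<\delta$ for all $n\in\mathbb{Z}$ there is $x\in X$ with $d(f^n(x),x_n)<\varepsilon$ for all $n\in\mathbb{Z}$ (negative powers being powers of $f^{-1}$). *)

theory Defs
  imports "HOL-Analysis.Analysis"
begin

definition ultrametric :: "('a::metric_space) itself \<Rightarrow> bool" where
  "ultrametric _ \<longleftrightarrow> (\<forall>x y z::'a. dist x z \<le> max (dist x y) (dist y z))"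

definition int_iter :: "('a \<Rightarrow> 'a) \<Rightarrow> int \<Rightarrow> 'a \<Rightarrow> 'a" where
  "int_iter f n = (if n \<ge> 0 then f ^^ nat n else (inv f) ^^ nat (- n))"

definition two_sided_shadowing :: "('a::metric_space \<Rightarrow> 'a) \<Rightarrow> bool" where
  "two_sided_shadowing f \<longleftrightarrow>
    (\<forall>\<epsilon>>0. \<exists>\<delta>>0. \<forall>xs :: int \<Rightarrow> 'a.
       (\<forall>n. dist (f (xs n)) (xs (n + 1)) < \<delta>) \<longrightarrow>
       (\<exists>x. \<forall>n. dist (int_iter f n x) (xs n) < \<epsilon>))"

end

theory Submission
  imports Defs
begin

theorem proposition5p7:
  fixes f :: "'a::metric_space \<Rightarrow> 'a"
  assumes "ultrametric TYPE('a)"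
    and "\<And>x y. dist (f x) (f y) = dist x y"
    and "surj f"
  shows "two_sided_shadowing f"
  unfolding two_sided_shadowing_def
proof (intro allI impI)
  fix e :: real assume e: "e > 0"
  have um: "\<And>x y z::'a. dist x z \<le> max (dist x y) (dist y z)"
    using assms(1) unfolding ultrametric_def by blast
  show "\<exists>\<delta>>0. \<forall>xs :: int \<Rightarrow> 'a. (\<forall>n. dist (f (xs n)) (xs (n + 1)) < \<delta>) \<longrightarrow>
       (\<exists>x. \<forall>n. dist (int_iter f n x) (xs n) < e)"
  proof (intro exI[of _ e] conjI allI impI e)
    fix xs :: "int \<Rightarrow> 'a"
    assume h: "\<forall>n. dist (f (xs n)) (xs (n + 1)) < e"
    define g where "g = inv f"
    have fg: "\<And>y. f (g y) = y" unfolding g_def using assms(3) by (simp add: surj_f_inv_f)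
    have P1: "dist ((f^^n) (xs 0)) (xs (int n)) < e" for n
    proof (induction n)
      case 0 then show ?case using e by simp
    next
      case (Suc n)
      have "dist ((f^^Suc n) (xs 0)) (xs (int (Suc n)))
          \<le> max (dist ((f^^Suc n) (xs 0)) (f (xs (int n)))) (dist (f (xs (int n))) (xs (int (Suc n))))"
        by (rule um)
      also have "dist ((f^^Suc n) (xs 0)) (f (xs (int n))) = dist ((f^^n) (xs 0)) (xs (int n))"
        using assms(2) by simp
      finally show ?case using Suc h[rule_format, of "int n"] by (simp add: add.commute)
    qed
    have P2: "dist ((g^^n) (xs 0)) (xs (- int n)) < e" for n
    proof (induction n)
      case 0 then show ?case using e by simp
    next
      case (Suc n)
      have "dist ((g^^Suc n) (xs 0)) (xs (- int (Suc n)))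
          = dist (f ((g^^Suc n) (xs 0))) (f (xs (- int (Suc n))))" using assms(2) by simp
      also have "\<dots> = dist ((g^^n) (xs 0)) (f (xs (- int (Suc n))))" using fg by simp
      also have "\<dots> \<le> max (dist ((g^^n) (xs 0)) (xs (- int n))) (dist (xs (- int n)) (f (xs (- int (Suc n)))))"
        by (rule um)
      also have "\<dots> < e"
      proof -
        have "dist (f (xs (- int (Suc n)))) (xs (- int (Suc n) + 1)) < e" using h by blast
        moreover have "- int (Suc n) + 1 = - int n" by simp
        ultimately have "dist (xs (- int n)) (f (xs (- int (Suc n)))) < e" by (simp add: dist_commute)
        then show ?thesis using Suc by simp
      qed
      finally show ?case .
    qed
    show "\<exists>x. \<forall>n. dist (int_iter f n x) (xs n) < e"
    proof (intro exI[of _ "xs 0"] allI)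
      fix n :: int
      show "dist (int_iter f n (xs 0)) (xs n) < e"
      proof (cases "n \<ge> 0")
        case True
        then show ?thesis using P1[of "nat n"] by (simp add: int_iter_def)
      next
        case False
        then have "- int (nat (-n)) = n" by simp
        then show ?thesis using False P2[of "nat (-n)"] by (simp add: int_iter_def g_def)
      qed
    qed
  qed
qed

end
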